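(* For every dimension $d\ge3$ and every integer $k\ge3$ there exists a $d$-dimensional lattice polytope $P\subseteq\mathbb{R}^d$ with $\mathrm{width}(P)=k$ such that for every integer $t\ge2$ there is a lattice point in $tP$ which is not a sum of $t$ lattice points of $P$. (For $d=3$ one can take $P=\mathrm{conv}(\{(3,0,-1),(0,2,-1)\}\cup[0,k]^3)$, and for $d>3$ its product with $[0,k]^{d-3}$.)
   Context: A lattice polytope is the convex hull of finitely many points of $\mathbb{Z}^d$. $\mathrm{width}(P)=\min_{u\in(\mathbb{Z}^d)^*\setminus\{0\}}\max_{x,y\in P}|u(x)-u(y)|$. *)

theory Defs
  imports "HOL-Analysis.Analysis"
begin

definition lattice_points :: "(real ^ 'n) set" where
  "lattice_points = {x. \<forall>i. x $ i \<in> \<int>}"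

definition lattice_polytope :: "(real ^ 'n) set \<Rightarrow> bool" where
  "lattice_polytope P \<longleftrightarrow>
     (\<exists>S. finite S \<and> S \<subseteq> lattice_points \<and> P = convex hull S)"

definition lattice_width :: "(real ^ 'n) set \<Rightarrow> real" where
  "lattice_width P =
     Inf ((\<lambda>u. Sup {\<bar>u \<bullet> x - u \<bullet> y\<bar> | x y. x \<in> P \<and> y \<in> P})
          ` (lattice_points - {0}))"

end

theory Submission
  imports Defs
begin

lemma hull_ge3:
  fixes S :: "(real ^ 'n) set"
  assumes "\<And>s. s \<in> S \<Longrightarrow> c \<le> \<alpha> * s$i + \<beta> * s$j + \<gamma> * s$l"
    and "x \<in> convex hull S"
  shows "c \<le> \<alpha> * x$i + \<beta> * x$j + \<gamma> * x$l"
proof -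
  define v where "v = axis i \<alpha> + axis j \<beta> + axis l \<gamma>"
  have vx: "\<And>y. v \<bullet> y = \<alpha> * y$i + \<beta> * y$j + \<gamma> * y$l"
    by (simp add: v_def inner_add_left inner_axis')
  have "convex hull S \<subseteq> {x. c \<le> v \<bullet> x}"
  proof (rule hull_minimal)
    show "convex {x. c \<le> v \<bullet> x}" by (rule convex_halfspace_ge)
    show "S \<subseteq> {x. c \<le> v \<bullet> x}" using assms(1) by (auto simp: vx)
  qed
  with assms(2) show ?thesis by (auto simp: vx)
qed

lemma convex4:
  fixes C :: "'a::real_vector set"
  assumes "convex C" "x1 \<in> C" "x2 \<in> C" "x3 \<in> C" "x4 \<in> C"
    "u1 \<ge> 0" "u2 \<ge> 0" "u3 \<ge> 0" "u4 \<ge> 0" "u1 + u2 + u3 + u4 = 1"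
  shows "u1 *\<^sub>R x1 + u2 *\<^sub>R x2 + u3 *\<^sub>R x3 + u4 *\<^sub>R x4 \<in> C"
proof -
  have "(\<Sum>j\<in>{0,1,2,3::nat}. [u1,u2,u3,u4]!j *\<^sub>R [x1,x2,x3,x4]!j) \<in> C"
    by (rule convex_sum) (use assms in \<open>auto\<close>)
  then show ?thesis by (simp add: add.assoc)
qed

lemma key_int:
  fixes m1 m2 m3 k :: int
  assumes "0 \<le> m1" "0 \<le> m2" "-1 \<le> m3" "2*m1+3*m2 - 5*k*m3 \<le> 6+5*k"
  shows "2*m1+3*m2+6*m3 \<noteq> 1"
proof (cases "m3 = -1")
  case True with assms show ?thesis by simp
next
  case False with assms show ?thesis by presburger
qed


lemma three_idx:
  assumes "CARD('a) \<ge> 3"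
  obtains i1 i2 i3 :: 'a where "i1 \<noteq> i2" "i1 \<noteq> i3" "i2 \<noteq> i3"
proof -
  obtain T :: "'a set" where T: "card T = 3" "finite T"
    using obtain_subset_with_card_n[OF assms] by metis
  then show ?thesis using that by (auto simp: card_Suc_eq numeral_3_eq_3)
qed

theorem proposition2p6:
  fixes k :: int
  assumes "CARD('n) \<ge> 3" and "k \<ge> 3"
  shows "\<exists>P :: (real ^ 'n) set.
           lattice_polytope P \<and> aff_dim P = int CARD('n) \<and>
           lattice_width P = real_of_int k \<and>
           (\<forall>t::nat. t \<ge> 2 \<longrightarrow>
              (\<exists>z \<in> lattice_points \<inter> ((\<lambda>x. real t *\<^sub>R x) ` P).
                 \<not> (\<exists>f :: nat \<Rightarrow> real ^ 'n.
                        (\<forall>i<t. f i \<in> P \<inter> lattice_points) \<and>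
                        z = (\<Sum>i<t. f i))))"
proof -
  obtain i1 i2 i3 :: 'n where d: "i1 \<noteq> i2" "i1 \<noteq> i3" "i2 \<noteq> i3"
    using three_idx[OF assms(1)] by metis
  define K where "K = real_of_int k"
  have K3: "K \<ge> 3" using assms(2) by (simp add: K_def)
  define a :: "real^'n" where "a = (\<chi> i. if i = i1 then 3 else if i = i3 then -1 else 0)"
  define b :: "real^'n" where "b = (\<chi> i. if i = i2 then 2 else if i = i3 then -1 else 0)"
  define e :: "'n \<Rightarrow> real^'n" where "e = (\<lambda>i. axis i K)"
  define S where "S = {0, a, b} \<union> range e"
  define P where "P = convex hull S"
  have finS: "finite S" by (simp add: S_def)
  have SL: "S \<subseteq> lattice_points"
    by (auto simp: S_def lattice_points_def a_def b_def e_def axis_def K_def)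
  have lp: "lattice_polytope P" using finS SL by (auto simp: lattice_polytope_def P_def)
  have SP: "S \<subseteq> P" by (simp add: P_def hull_subset)
  have convP: "convex P" by (simp add: P_def)
  have KK: "- 6 - 5 * K \<le> 5 * K * K"
  proof -
    have "0 \<le> 5 * K * K" using K3 by simp
    then show ?thesis using K3 by linarith
  qed
  have gen: "\<And>s. s \<in> S \<Longrightarrow> 0 \<le> s$i1 \<and> s$i1 \<le> K \<and> 0 \<le> s$i2 \<and> -1 \<le> s$i3 \<and>
      0 \<le> 2* s$i1 + 3* s$i2 + 6* s$i3 \<and> -(6+5*K) \<le> (-2)* s$i1 + (-3)* s$i2 + (5*K)* s$i3"
    using d K3 KK by (auto simp: S_def a_def b_def e_def axis_def)
  have I1: "\<And>x. x \<in> P \<Longrightarrow> 0 \<le> x$i1"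
  proof -
    fix x assume "x \<in> P"
    then have "0 \<le> 1 * x$i1 + 0 * x$i2 + 0 * x$i3"
      unfolding P_def by (rule hull_ge3[rotated]) (use gen in auto)
    then show "0 \<le> x$i1" by simp
  qed
  have I1': "\<And>x. x \<in> P \<Longrightarrow> x$i1 \<le> K"
  proof -
    fix x assume "x \<in> P"
    then have "-K \<le> (-1) * x$i1 + 0 * x$i2 + 0 * x$i3"
      unfolding P_def by (rule hull_ge3[rotated]) (use gen in force)
    then show "x$i1 \<le> K" by simp
  qed
  have I2: "\<And>x. x \<in> P \<Longrightarrow> 0 \<le> x$i2"
  proof -
    fix x assume "x \<in> P"
    then have "0 \<le> 0 * x$i1 + 1 * x$i2 + 0 * x$i3"
      unfolding P_def by (rule hull_ge3[rotated]) (use gen in auto)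
    then show "0 \<le> x$i2" by simp
  qed
  have I3: "\<And>x. x \<in> P \<Longrightarrow> -1 \<le> x$i3"
  proof -
    fix x assume "x \<in> P"
    then have "-1 \<le> 0 * x$i1 + 0 * x$i2 + 1 * x$i3"
      unfolding P_def by (rule hull_ge3[rotated]) (use gen in auto)
    then show "-1 \<le> x$i3" by simp
  qed
  have I4: "\<And>x. x \<in> P \<Longrightarrow> 0 \<le> 2*x$i1 + 3*x$i2 + 6*x$i3"
    unfolding P_def by (rule hull_ge3[rotated]) (use gen in auto)
  have I5: "\<And>x. x \<in> P \<Longrightarrow> -(6+5*K) \<le> (-2)*x$i1 + (-3)*x$i2 + (5*K)*x$i3"
    unfolding P_def by (rule hull_ge3[rotated]) (use gen in auto)
  define w where "w = (\<lambda>x::real^'n. 2*x$i1 + 3*x$i2 + 6*x$i3)"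
  have wlat: "\<And>y. y \<in> P \<Longrightarrow> y \<in> lattice_points \<Longrightarrow> w y = 0 \<or> w y \<ge> 2"
  proof -
    fix y assume yP: "y \<in> P" and yL: "y \<in> lattice_points"
    obtain m1 where m1: "y$i1 = of_int m1" using yL by (auto simp: lattice_points_def elim!: Ints_cases)
    obtain m2 where m2: "y$i2 = of_int m2" using yL by (auto simp: lattice_points_def elim!: Ints_cases)
    obtain m3 where m3: "y$i3 = of_int m3" using yL by (auto simp: lattice_points_def elim!: Ints_cases)
    have h1: "0 \<le> m1" using I1[OF yP] m1 by simp
    have h2: "0 \<le> m2" using I2[OF yP] m2 by simp
    have h3: "-1 \<le> m3" using I3[OF yP] m3 by simp
    have h4: "0 \<le> 2*m1+3*m2+6*m3" using I4[OF yP] m1 m2 m3 by simp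
    have "-(6+5*K) \<le> (-2)* of_int m1 + (-3)* of_int m2 + (5*K)* of_int m3"
      using I5[OF yP] m1 m2 m3 by simp
    then have "real_of_int (-(6+5*k)) \<le> real_of_int ((-2)*m1 + (-3)*m2 + (5*k)*m3)"
      by (simp add: K_def)
    then have h5: "2*m1+3*m2 - 5*k*m3 \<le> 6+5*k" by linarith
    have "2*m1+3*m2+6*m3 \<noteq> 1" by (rule key_int[OF h1 h2 h3 h5])
    with h4 have "2*m1+3*m2+6*m3 = 0 \<or> 2*m1+3*m2+6*m3 \<ge> 2" by linarith
    then show "w y = 0 \<or> w y \<ge> 2"
    proof
      assume "2*m1+3*m2+6*m3 = 0"
      then have "real_of_int (2*m1+3*m2+6*m3) = 0" by simp
      then show ?thesis by (simp add: w_def m1 m2 m3)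
    next
      assume "2*m1+3*m2+6*m3 \<ge> 2"
      then have "real_of_int (2*m1+3*m2+6*m3) \<ge> 2" by linarith
      then show ?thesis by (simp add: w_def m1 m2 m3)
    qed
  qed
  have wnn: "\<And>y. y \<in> P \<Longrightarrow> 0 \<le> w y" using I4 by (simp add: w_def)
  have nondec: "\<exists>z \<in> lattice_points \<inter> ((\<lambda>x. real t *\<^sub>R x) ` P).
                 \<not> (\<exists>f :: nat \<Rightarrow> real ^ 'n.
                        (\<forall>i<t. f i \<in> P \<inter> lattice_points) \<and>
                        z = (\<Sum>i<t. f i))" if t2: "t \<ge> 2" for t :: nat
  proof -
    define T where "T = real t"
    have T2: "T \<ge> 2" using t2 by (simp add: T_def)
    define z :: "real^'n" where
      "z = (\<chi> j. if j = i1 then 2 else if j = i2 then 2*T - 3 else if j = i3 then -(T - 1) else 0)"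
    have zL: "z \<in> lattice_points"
      by (auto simp: lattice_points_def z_def T_def)
    define p where "p = (1/T) *\<^sub>R z"
    have pP: "p \<in> P"
    proof -
      have "(1/(2*T)) *\<^sub>R a + ((2*T-3)/(2*T)) *\<^sub>R b + (1/(2*T*K)) *\<^sub>R e i1
            + (1/T - 1/(2*T*K)) *\<^sub>R 0 \<in> P"
      proof (rule convex4[OF convP])
        show "a \<in> P" "b \<in> P" "e i1 \<in> P" "0 \<in> P" using SP by (auto simp: S_def)
        show "0 \<le> 1/(2*T)" "0 \<le> (2*T-3)/(2*T)" "0 \<le> 1/(2*T*K)" using T2 K3 by auto
        have "1/(2*T*K) \<le> 1/T" using T2 K3 by (simp add: field_simps)
        then show "0 \<le> 1/T - 1/(2*T*K)" by simp
        show "1/(2*T) + (2*T-3)/(2*T) + 1/(2*T*K) + (1/T - 1/(2*T*K)) = 1"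
          using T2 K3 by (simp add: field_simps)
      qed
      moreover have "(1/(2*T)) *\<^sub>R a + ((2*T-3)/(2*T)) *\<^sub>R b + (1/(2*T*K)) *\<^sub>R e i1
            + (1/T - 1/(2*T*K)) *\<^sub>R 0 = p"
        unfolding vec_eq_iff
      proof
        fix j
        show "((1/(2*T)) *\<^sub>R a + ((2*T-3)/(2*T)) *\<^sub>R b + (1/(2*T*K)) *\<^sub>R e i1
            + (1/T - 1/(2*T*K)) *\<^sub>R 0) $ j = p $ j"
          using d T2 K3 by (auto simp: p_def z_def a_def b_def e_def axis_def field_simps)
      qed
      ultimately show ?thesis by simp
    qed
    have zP: "z \<in> (\<lambda>x. real t *\<^sub>R x) ` P"
    proof
      show "z = real t *\<^sub>R p" using T2 by (simp add: p_def T_def[symmetric])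
    qed (rule pP)
    have wz: "w z = 1" using d by (auto simp: w_def z_def algebra_simps)
    show ?thesis
    proof (intro bexI[of _ z] notI)
      show "z \<in> lattice_points \<inter> (\<lambda>x. real t *\<^sub>R x) ` P" using zL zP by simp
    next
      assume "\<exists>f. (\<forall>i<t. f i \<in> P \<inter> lattice_points) \<and> z = (\<Sum>i<t. f i)"
      then obtain f where f: "\<forall>i<t. f i \<in> P \<inter> lattice_points" and zf: "z = (\<Sum>i<t. f i)"
        by blast
      have "w z = (\<Sum>i<t. w (f i))"
        by (simp add: zf w_def sum_distrib_left sum.distrib)
      then have s1: "(\<Sum>i<t. w (f i)) = 1" using wz by simp
      show False
      proof (cases "\<forall>i<t. w (f i) = 0")
        case True
        then have "(\<Sum>i<t. w (f i)) = 0" by simp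
        with s1 show False by simp
      next
        case False
        then obtain i where i: "i < t" "w (f i) \<noteq> 0" by blast
        then have "w (f i) \<ge> 2" using wlat f by blast
        moreover have "w (f i) \<le> (\<Sum>i<t. w (f i))"
          by (rule member_le_sum) (use i f wnn in auto)
        ultimately show False using s1 by simp
      qed
    qed
  qed
  have "bounded P" unfolding P_def
    by (intro compact_imp_bounded compact_convex_hull finite_imp_compact finS)
  then obtain B where B: "\<And>x. x \<in> P \<Longrightarrow> norm x \<le> B" by (auto simp: bounded_iff)
  define g where "g = (\<lambda>u::real^'n. Sup {\<bar>u \<bullet> x - u \<bullet> y\<bar> | x y. x \<in> P \<and> y \<in> P})"
  have gk: "K \<le> g u" if u: "u \<in> lattice_points - {0}" for u
  proof -
    obtain i where ui: "u$i \<noteq> 0" using u by (auto simp: vec_eq_iff)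
    have "u$i \<in> \<int>" using u by (auto simp: lattice_points_def)
    then have ai: "\<bar>u$i\<bar> \<ge> 1" using ui by (auto elim!: Ints_cases)
    have mem: "\<bar>u \<bullet> e i - u \<bullet> 0\<bar> \<in> {\<bar>u \<bullet> x - u \<bullet> y\<bar> | x y. x \<in> P \<and> y \<in> P}"
    proof -
      have "e i \<in> P" "0 \<in> P" using SP by (auto simp: S_def)
      then show ?thesis by blast
    qed
    have bdd: "bdd_above {\<bar>u \<bullet> x - u \<bullet> y\<bar> | x y. x \<in> P \<and> y \<in> P}"
    proof (rule bdd_aboveI)
      fix r assume "r \<in> {\<bar>u \<bullet> x - u \<bullet> y\<bar> | x y. x \<in> P \<and> y \<in> P}"
      then obtain x y where xy: "x \<in> P" "y \<in> P" "r = \<bar>u \<bullet> x - u \<bullet> y\<bar>" by blast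
      have "r \<le> \<bar>u \<bullet> x\<bar> + \<bar>u \<bullet> y\<bar>" using xy(3) by linarith
      also have "\<dots> \<le> norm u * norm x + norm u * norm y"
        by (intro add_mono Cauchy_Schwarz_ineq2)
      also have "\<dots> \<le> norm u * B + norm u * B"
        by (intro add_mono mult_left_mono B xy norm_ge_zero)
      finally show "r \<le> norm u * B + norm u * B" .
    qed
    have "K \<le> \<bar>u$i\<bar> * K" using ai K3 by simp
    also have "\<dots> = \<bar>u \<bullet> e i - u \<bullet> 0\<bar>" using K3 by (simp add: e_def inner_axis abs_mult)
    also have "\<dots> \<le> g u" unfolding g_def by (rule cSup_upper[OF mem bdd])
    finally show ?thesis .
  qed
  have e1L: "axis i1 1 \<in> lattice_points - {0}"
    by (auto simp: lattice_points_def axis_def vec_eq_iff)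
  have ge1: "g (axis i1 1) = K"
    unfolding g_def
  proof (rule cSup_eq_maximum)
    show "K \<in> {\<bar>axis i1 1 \<bullet> x - axis i1 1 \<bullet> y\<bar> | x y. x \<in> P \<and> y \<in> P}"
    proof -
      have "K = \<bar>axis i1 1 \<bullet> e i1 - axis i1 1 \<bullet> 0\<bar>" using K3 by (simp add: e_def inner_axis')
      moreover have "e i1 \<in> P" "0 \<in> P" using SP by (auto simp: S_def)
      ultimately show ?thesis by blast
    qed
  next
    fix r assume "r \<in> {\<bar>axis i1 1 \<bullet> x - axis i1 1 \<bullet> y\<bar> | x y. x \<in> P \<and> y \<in> P}"
    then obtain x y where xy: "x \<in> P" "y \<in> P" "r = \<bar>axis i1 1 \<bullet> x - axis i1 1 \<bullet> y\<bar>" by blast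
    then have "r = \<bar>x$i1 - y$i1\<bar>" by (simp add: inner_axis')
    then show "r \<le> K" using I1 I1' xy by (simp add: abs_le_iff) (meson add_increasing2 diff_le_eq le_diff_eq order_trans xy(1) xy(2))
  qed
  have width: "lattice_width P = K"
    unfolding lattice_width_def g_def[symmetric]
  proof (rule cInf_eq_minimum)
    show "K \<in> g ` (lattice_points - {0})" using e1L ge1 by force
  next
    fix r assume "r \<in> g ` (lattice_points - {0})"
    then show "K \<le> r" using gk by auto
  qed
  have aff: "aff_dim P = int CARD('n)"
  proof -
    define T where "T = insert 0 (range e)"
    have TP: "T \<subseteq> P" using SP by (auto simp: T_def S_def)
    have "0 \<in> affine hull T" by (simp add: T_def hull_inc)
    then have "aff_dim T = int (dim ((+) (- 0) ` T))" by (rule aff_dim_eq_dim)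
    then have aT: "aff_dim T = int (dim T)" by simp
    have "span T = UNIV"
    proof -
      have "x \<in> span T" for x :: "real^'n"
      proof -
        have "x = (\<Sum>i\<in>UNIV. (x$i / K) *\<^sub>R e i)"
          using K3 by (simp add: vec_eq_iff e_def axis_def sum_component if_distrib cong: if_cong)
        also have "\<dots> \<in> span T"
          by (intro span_sum span_mul span_base) (auto simp: T_def)
        finally show ?thesis .
      qed
      then show ?thesis by auto
    qed
    then have "dim T = dim (UNIV :: (real^'n) set)" by (metis dim_span)
    then have "dim T = DIM(real^'n)" by simp
    then have "aff_dim T = int CARD('n)" using aT by simp
    moreover have "aff_dim T \<le> aff_dim P" by (rule aff_dim_subset[OF TP])
    moreover have "aff_dim P \<le> int CARD('n)" using aff_dim_le_DIM[of P] by simp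
    ultimately show ?thesis by linarith
  qed
  show ?thesis
    using lp aff width nondec by (intro exI[of _ P]) (simp add: K_def)
qed

end
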